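(* Let $c>0$ be fixed, let $k\in\mathbb{N}$, and let $\phi_k(x)=(x^2+c^2)^{k-1/2}$ be the $k$-th order multiquadric. Let $\{x_j\}_{j\in\mathbb{Z}}\subset\mathbb{R}$ be a scattered sequence. Then for every $\epsilon>0$ and every continuous function $f:[a,b]\to\mathbb{R}$ there exist $N\in\mathbb{N}$ and real coefficients $a_1,\dots,a_N$ such that \[ \sup_{x\in[a,b]}\left|f(x)-\sum_{j=1}^{N}a_j\phi_k(x-x_j)\right|<\epsilon . \]
   Context: A sequence $\mathcal{X}$ of real numbers is $\delta$-separated if $\inf_{x,y\in\mathcal{X},\,x\neq y}|x-y|=\delta>0$. A sequence $\{x_j\}_{j\in\mathbb{Z}}\subset\mathbb{R}$ is called scattered if it is $\delta$-separated for some $\delta>0$ and $\lim_{j\to\pm\infty}x_j=\pm\infty$. *)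

theory Defs
  imports "HOL-Analysis.Analysis"
begin

definition multiquadric :: "real \<Rightarrow> nat \<Rightarrow> real \<Rightarrow> real" where
  "multiquadric c k x = (x\<^sup>2 + c\<^sup>2) powr (real k - 1/2)"

definition delta_separated :: "real set \<Rightarrow> real \<Rightarrow> bool" where
  "delta_separated X \<delta> \<longleftrightarrow>
     \<delta> > 0 \<and> Inf {\<bar>x - y\<bar> | x y. x \<in> X \<and> y \<in> X \<and> x \<noteq> y} = \<delta>"

definition scattered :: "(int \<Rightarrow> real) \<Rightarrow> bool" where
  "scattered xs \<longleftrightarrow> (\<exists>\<delta>>0. delta_separated (range xs) \<delta>)
     \<and> filterlim xs at_top at_top \<and> filterlim xs at_bot at_bot"

end

theory Submission
  imports Defs
begin


lemma powr_bound_half: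
  fixes r t :: real assumes "\<bar>t\<bar> \<le> 1/2"
  shows "(1+t) powr r \<le> 2 powr \<bar>r\<bar>"
proof (cases "r \<ge> 0")
  case True
  have "(1+t) powr r \<le> 2 powr r" by (rule powr_mono2) (use True assms in auto)
  thus ?thesis using True by simp
next
  case False
  have "(1+t) powr r \<le> (1/2) powr r" by (rule powr_mono2') (use False assms in auto)
  also have "(1/2::real) powr r = 2 powr (-r)" by (simp add: powr_minus_divide powr_divide)
  finally show ?thesis using False by simp
qed

lemma gchoose_step:
  fixes e :: real
  shows "(e gchoose p) * fact p * (e - real p) = (e gchoose Suc p) * fact (Suc p)"
proof -
  have "e * (e gchoose p) = of_nat p * (e gchoose p) + of_nat (Suc p) * (e gchoose (Suc p))"
    by (rule gbinomial_mult_1)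
  hence "(e - real p) * (e gchoose p) = real (Suc p) * (e gchoose (Suc p))" by (simp add: algebra_simps)
  thus ?thesis by (simp add: algebra_simps)
qed

lemma binom_taylor:
  fixes e :: real and N :: nat
  shows "\<exists>C. \<forall>v::real. \<bar>v\<bar> \<le> 1/2 \<longrightarrow>
     \<bar>(1+v) powr e - (\<Sum>p\<le>N. (e gchoose p) * v^p)\<bar> \<le> C * \<bar>v\<bar>^(Suc N)"
proof -
  define diff where "diff = (\<lambda>p (v::real). (e gchoose p) * fact p * (1+v) powr (e - real p))"
  define C where "C = \<bar>e gchoose Suc N\<bar> * 2 powr \<bar>e - real (Suc N)\<bar>"
  have "\<bar>(1+v) powr e - (\<Sum>p\<le>N. (e gchoose p) * v^p)\<bar> \<le> C * \<bar>v\<bar>^(Suc N)"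
    if v: "\<bar>v\<bar> \<le> 1/2" for v
  proof -
    have d0: "diff 0 = (\<lambda>v. (1+v) powr e)" by (simp add: diff_def)
    have DER: "\<forall>m t. m < Suc N \<and> \<bar>t\<bar> \<le> \<bar>v\<bar> \<longrightarrow> DERIV (diff m) t :> diff (Suc m) t"
    proof (intro allI impI)
      fix m t assume mt: "m < Suc N \<and> \<bar>t\<bar> \<le> \<bar>v\<bar>"
      hence pos: "1 + t > 0" using v by auto
      have "DERIV (\<lambda>t. (1+t) powr (e - real m)) t :> (e - real m) * (1+t) powr (e - real m - of_nat 1) * 1"
        by (rule DERIV_fun_powr) (auto intro!: derivative_eq_intros pos)
      hence "DERIV (\<lambda>t. (e gchoose m) * fact m * (1+t) powr (e - real m)) t :>
             (e gchoose m) * fact m * ((e - real m) * (1+t) powr (e - real m - of_nat 1) * 1)"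
        by (rule DERIV_cmult)
      moreover have "(e gchoose m) * fact m * ((e - real m) * (1+t) powr (e - real m - of_nat 1) * 1)
          = diff (Suc m) t"
      proof -
        have "(e gchoose m) * fact m * ((e - real m) * (1+t) powr (e - real m - of_nat 1) * 1)
           = ((e gchoose m) * fact m * (e - real m)) * (1+t) powr (e - real (Suc m))"
          by (simp add: algebra_simps)
        also have "\<dots> = diff (Suc m) t" unfolding diff_def gchoose_step ..
        finally show ?thesis .
      qed
      ultimately have D: "DERIV (\<lambda>t. (e gchoose m) * fact m * (1+t) powr (e - real m)) t :> diff (Suc m) t"
        by metis
      have dm: "diff m = (\<lambda>t. (e gchoose m) * fact m * (1+t) powr (e - real m))"
        by (simp add: diff_def fun_eq_iff)
      show "DERIV (diff m) t :> diff (Suc m) t" unfolding dm by (rule D)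
    qed
    from Maclaurin_bi_le[OF d0 DER]
    obtain t where t: "\<bar>t\<bar> \<le> \<bar>v\<bar>" and eq: "(1+v) powr e = (\<Sum>m<Suc N. diff m 0 / fact m * v ^ m) + diff (Suc N) t / fact (Suc N) * v ^ Suc N"
      by blast
    have s: "(\<Sum>m<Suc N. diff m 0 / fact m * v ^ m) = (\<Sum>p\<le>N. (e gchoose p) * v^p)"
      by (rule sum.cong) (auto simp: diff_def lessThan_Suc_atMost)
    have r: "diff (Suc N) t / fact (Suc N) * v ^ Suc N = (e gchoose Suc N) * (1+t) powr (e - real (Suc N)) * v ^ Suc N"
      by (simp add: diff_def)
    have b: "(1+t) powr (e - real (Suc N)) \<le> 2 powr \<bar>e - real (Suc N)\<bar>"
      by (rule powr_bound_half) (use t v in auto)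
    have "\<bar>(1+v) powr e - (\<Sum>p\<le>N. (e gchoose p) * v^p)\<bar> = \<bar>e gchoose Suc N\<bar> * (1+t) powr (e - real (Suc N)) * \<bar>v\<bar> ^ Suc N"
      using eq s r by (simp add: abs_mult power_abs)
    also have "\<dots> \<le> C * \<bar>v\<bar>^(Suc N)" unfolding C_def
      by (intro mult_right_mono mult_left_mono b) auto
    finally show ?thesis .
  qed
  thus ?thesis by blast
qed

lemma binom_exact:
  fixes v :: real and e N :: nat
  assumes "e \<le> N" "1 + v > 0"
  shows "(1+v) powr (real e) = (\<Sum>p\<le>N. (real e gchoose p) * v^p)"
proof -
  have "(1+v) powr (real e) = (v+1)^e" using assms by (simp add: powr_realpow add.commute)
  also have "\<dots> = (\<Sum>p\<le>e. real (e choose p) * v^p)" by (simp add: binomial_ring)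
  also have "\<dots> = (\<Sum>p\<le>N. real (e choose p) * v^p)"
    by (rule sum.mono_neutral_left) (use assms in auto)
  also have "\<dots> = (\<Sum>p\<le>N. (real e gchoose p) * v^p)" by (simp add: binomial_gbinomial)
  finally show ?thesis .
qed

definition AP :: "real \<Rightarrow> nat \<Rightarrow> (int \<Rightarrow> real) \<Rightarrow> real \<Rightarrow> real \<Rightarrow> (real \<Rightarrow> real) \<Rightarrow> bool" where
  "AP c k xs a b g \<longleftrightarrow> (\<forall>\<epsilon>>0. \<exists>(N::nat) (coef::nat \<Rightarrow> real).
     \<forall>x\<in>{a..b}. \<bar>g x - (\<Sum>j=1..N. coef j * multiquadric c k (x - xs (int j)))\<bar> < \<epsilon>)"

lemma sum_ext_coef:
  fixes F :: "nat \<Rightarrow> real"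
  assumes "N1 \<le> N"
  shows "(\<Sum>j=1..N. (if j \<le> N1 then cf j else 0) * F j) = (\<Sum>j=1..N1. cf j * F j)"
  by (rule sum.mono_neutral_cong_right) (use assms in auto)

lemma AP_base:
  assumes "j \<ge> 1"
  shows "AP c k xs a b (\<lambda>x. multiquadric c k (x - xs (int j)))"
  unfolding AP_def
proof (intro allI impI)
  fix \<epsilon> :: real assume "\<epsilon> > 0"
  have "\<forall>x\<in>{a..b}. \<bar>multiquadric c k (x - xs (int j)) -
     (\<Sum>i=1..j. (if i = j then 1 else 0) * multiquadric c k (x - xs (int i)))\<bar> < \<epsilon>"
  proof
    fix x
    let ?F = "\<lambda>i. multiquadric c k (x - xs (int i))"
    have "(\<Sum>i=1..j. (if i = j then 1 else 0) * ?F i) = (\<Sum>i\<in>{1..j}. if i = j then ?F i else 0)"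
      by (rule sum.cong) auto
    also have "\<dots> = ?F j" using assms by (simp add: sum.delta)
    finally show "\<bar>?F j - (\<Sum>i=1..j. (if i = j then 1 else 0) * ?F i)\<bar> < \<epsilon>" using \<open>\<epsilon> > 0\<close> by simp
  qed
  thus "\<exists>(N::nat) (coef::nat \<Rightarrow> real). \<forall>x\<in>{a..b}. \<bar>multiquadric c k (x - xs (int j)) -
     (\<Sum>j=1..N. coef j * multiquadric c k (x - xs (int j)))\<bar> < \<epsilon>"
    by (auto intro!: exI[of _ j] exI[of _ "\<lambda>i. if i = j then 1 else 0"])
qed

lemma AP_zero: "AP c k xs a b (\<lambda>x. 0)"
  unfolding AP_def by (intro allI impI exI[of _ 0]) auto

lemma AP_add:
  assumes f: "AP c k xs a b f" and g: "AP c k xs a b g"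
  shows "AP c k xs a b (\<lambda>x. f x + g x)"
  unfolding AP_def
proof (intro allI impI)
  fix \<epsilon> :: real assume e: "\<epsilon> > 0"
  obtain N1 c1 where 1: "\<forall>x\<in>{a..b}. \<bar>f x - (\<Sum>j=1..N1. c1 j * multiquadric c k (x - xs (int j)))\<bar> < \<epsilon>/2"
    using f e unfolding AP_def by (meson half_gt_zero)
  obtain N2 c2 where 2: "\<forall>x\<in>{a..b}. \<bar>g x - (\<Sum>j=1..N2. c2 j * multiquadric c k (x - xs (int j)))\<bar> < \<epsilon>/2"
    using g e unfolding AP_def by (meson half_gt_zero)
  define N where "N = max N1 N2"
  define cf where "cf = (\<lambda>j. (if j \<le> N1 then c1 j else 0) + (if j \<le> N2 then c2 j else 0))"
  have "\<forall>x\<in>{a..b}. \<bar>(f x + g x) - (\<Sum>j=1..N. cf j * multiquadric c k (x - xs (int j)))\<bar> < \<epsilon>"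
  proof
    fix x assume x: "x \<in> {a..b}"
    let ?F = "\<lambda>j. multiquadric c k (x - xs (int j))"
    have "(\<Sum>j=1..N. cf j * ?F j) = (\<Sum>j=1..N. (if j \<le> N1 then c1 j else 0) * ?F j)
         + (\<Sum>j=1..N. (if j \<le> N2 then c2 j else 0) * ?F j)"
      unfolding cf_def by (simp add: distrib_right sum.distrib)
    also have "\<dots> = (\<Sum>j=1..N1. c1 j * ?F j) + (\<Sum>j=1..N2. c2 j * ?F j)"
      using sum_ext_coef[of N1 N c1 ?F] sum_ext_coef[of N2 N c2 ?F] unfolding N_def by simp
    moreover have "\<bar>f x - (\<Sum>j=1..N1. c1 j * ?F j)\<bar> < \<epsilon>/2" using 1 x by blast
    moreover have "\<bar>g x - (\<Sum>j=1..N2. c2 j * ?F j)\<bar> < \<epsilon>/2" using 2 x by blast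
    ultimately show "\<bar>(f x + g x) - (\<Sum>j=1..N. cf j * ?F j)\<bar> < \<epsilon>"
      by linarith
  qed
  thus "\<exists>(N::nat) (coef::nat \<Rightarrow> real). \<forall>x\<in>{a..b}. \<bar>(f x + g x) -
     (\<Sum>j=1..N. coef j * multiquadric c k (x - xs (int j)))\<bar> < \<epsilon>" by blast
qed

lemma AP_scale:
  assumes f: "AP c k xs a b f"
  shows "AP c k xs a b (\<lambda>x. r * f x)"
proof (cases "r = 0")
  case True thus ?thesis using AP_zero by simp
next
  case False
  show ?thesis unfolding AP_def
  proof (intro allI impI)
    fix \<epsilon> :: real assume e: "\<epsilon> > 0"
    have "\<epsilon> / \<bar>r\<bar> > 0" using e False by simp
    then obtain N c1 where 1: "\<forall>x\<in>{a..b}. \<bar>f x - (\<Sum>j=1..N. c1 j * multiquadric c k (x - xs (int j)))\<bar> < \<epsilon>/\<bar>r\<bar>"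
      using f unfolding AP_def by blast
    have "\<forall>x\<in>{a..b}. \<bar>r * f x - (\<Sum>j=1..N. (r * c1 j) * multiquadric c k (x - xs (int j)))\<bar> < \<epsilon>"
    proof
      fix x assume x: "x \<in> {a..b}"
      have "\<bar>r * f x - (\<Sum>j=1..N. (r * c1 j) * multiquadric c k (x - xs (int j)))\<bar>
          = \<bar>r\<bar> * \<bar>f x - (\<Sum>j=1..N. c1 j * multiquadric c k (x - xs (int j)))\<bar>"
        by (simp add: sum_distrib_left abs_mult[symmetric] right_diff_distrib mult.assoc)
      also have "\<dots> < \<bar>r\<bar> * (\<epsilon>/\<bar>r\<bar>)" using 1 x False by (intro mult_strict_left_mono) auto
      finally show "\<bar>r * f x - (\<Sum>j=1..N. (r * c1 j) * multiquadric c k (x - xs (int j)))\<bar> < \<epsilon>"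
        using False by simp
    qed
    thus "\<exists>(N::nat) (coef::nat \<Rightarrow> real). \<forall>x\<in>{a..b}. \<bar>r * f x -
     (\<Sum>j=1..N. coef j * multiquadric c k (x - xs (int j)))\<bar> < \<epsilon>"
      by (auto intro!: exI[of _ N] exI[of _ "\<lambda>j. r * c1 j"])
  qed
qed

lemma AP_cong:
  assumes "AP c k xs a b f" "\<And>x. x \<in> {a..b} \<Longrightarrow> f x = g x"
  shows "AP c k xs a b g"
  using assms unfolding AP_def by simp

lemma AP_sum:
  assumes "finite I" "\<And>i. i \<in> I \<Longrightarrow> AP c k xs a b (F i)"
  shows "AP c k xs a b (\<lambda>x. \<Sum>i\<in>I. F i x)"
  using assms
proof (induction I rule: finite_induct)
  case empty thus ?case using AP_zero by simp
next
  case (insert i I)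
  have "AP c k xs a b (\<lambda>x. F i x + (\<Sum>i\<in>I. F i x))"
    by (rule AP_add) (use insert in auto)
  thus ?case using insert by simp
qed

lemma AP_limit:
  assumes "\<And>\<epsilon>. \<epsilon> > 0 \<Longrightarrow> \<exists>g. AP c k xs a b g \<and> (\<forall>x\<in>{a..b}. \<bar>f x - g x\<bar> < \<epsilon>)"
  shows "AP c k xs a b f"
  unfolding AP_def
proof (intro allI impI)
  fix \<epsilon> :: real assume e: "\<epsilon> > 0"
  obtain g where g: "AP c k xs a b g" "\<forall>x\<in>{a..b}. \<bar>f x - g x\<bar> < \<epsilon>/2"
    using assms[of "\<epsilon>/2"] e by auto
  obtain N c1 where 1: "\<forall>x\<in>{a..b}. \<bar>g x - (\<Sum>j=1..N. c1 j * multiquadric c k (x - xs (int j)))\<bar> < \<epsilon>/2"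
    using g(1) e unfolding AP_def by (meson half_gt_zero)
  have "\<forall>x\<in>{a..b}. \<bar>f x - (\<Sum>j=1..N. c1 j * multiquadric c k (x - xs (int j)))\<bar> < \<epsilon>"
  proof
    fix x assume x: "x \<in> {a..b}"
    have A: "\<bar>g x - (\<Sum>j=1..N. c1 j * multiquadric c k (x - xs (int j)))\<bar> < \<epsilon>/2" using 1 x by blast
    have B: "\<bar>f x - g x\<bar> < \<epsilon>/2" using g(2) x by blast
    show "\<bar>f x - (\<Sum>j=1..N. c1 j * multiquadric c k (x - xs (int j)))\<bar> < \<epsilon>" using A B by linarith
  qed
  thus "\<exists>(N::nat) (coef::nat \<Rightarrow> real). \<forall>x\<in>{a..b}. \<bar>f x -
     (\<Sum>j=1..N. coef j * multiquadric c k (x - xs (int j)))\<bar> < \<epsilon>" by blast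
qed

lemma final_from_monomials:
  assumes mono: "\<And>n. AP c k xs a b (\<lambda>x. x^n)"
    and f: "continuous_on {a..b} f" and e: "\<epsilon> > 0"
  shows "\<exists>(N::nat) (coef::nat \<Rightarrow> real).
           \<forall>x\<in>{a..b}. \<bar>f x - (\<Sum>j=1..N. coef j * multiquadric c k (x - xs (int j)))\<bar> < \<epsilon>"
proof -
  have "AP c k xs a b f"
  proof (rule AP_limit)
    fix \<delta> :: real assume d: "\<delta> > 0"
    obtain g where g: "real_polynomial_function g" "\<And>x. x \<in> {a..b} \<Longrightarrow> \<bar>f x - g x\<bar> < \<delta>"
      using Stone_Weierstrass_real_polynomial_function[OF compact_Icc f d] by blast
    obtain cf n where gform: "g = (\<lambda>x. \<Sum>i\<le>n. cf i * x^i)"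
      using g(1) real_polynomial_function_iff_sum by blast
    have "AP c k xs a b (\<lambda>x. \<Sum>i\<le>n. cf i * x^i)"
      by (rule AP_sum) (auto intro: AP_scale mono)
    thus "\<exists>g. AP c k xs a b g \<and> (\<forall>x\<in>{a..b}. \<bar>f x - g x\<bar> < \<delta>)"
      using g(2) gform by blast
  qed
  thus ?thesis using e unfolding AP_def by blast
qed



definition mqE :: "nat \<Rightarrow> nat \<Rightarrow> real" where
  "mqE k n = (if n \<le> 2*k-1 then real (2*k-1) else -1)"

definition mqA :: "real \<Rightarrow> nat \<Rightarrow> nat \<Rightarrow> nat \<Rightarrow> real \<Rightarrow> real" where
  "mqA c k n p t = (\<Sum>i\<le>2*k-1+n. ((real k - 1/2) gchoose i) * c^(2*i) *
      ((real (2*k-1) - 2*real i) gchoose p) * (-1)^p * t powr (real (2*k-1) - 2*real i - real p))"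

lemma expansion:
  fixes c B :: real and k n :: nat
  assumes c: "c > 0" and k: "k \<ge> 1" and B: "B \<ge> 0"
  shows "\<exists>T0 D. T0 \<ge> 1 \<and> (\<forall>t x. t \<ge> T0 \<longrightarrow> \<bar>x\<bar> \<le> B \<longrightarrow>
     \<bar>multiquadric c k (x - t) - (\<Sum>p\<le>n. x^p * mqA c k n p t)\<bar> \<le> D * t powr (mqE k n - real n - 1))"
proof -
  define m where "m = 2*k - 1"
  define s where "s = real k - 1/2"
  define J where "J = m + n"
  define ee where "ee = (\<lambda>i::nat. real m - 2 * real i)"
  define \<beta> where "\<beta> = (\<lambda>i::nat. (s gchoose i) * c^(2*i))"
  define E where "E = mqE k n"
  have Edef: "E = (if n \<le> m then real m else -1)" unfolding E_def mqE_def m_def by simp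
  have Adef: "mqA c k n p t = (\<Sum>i\<le>J. \<beta> i * (ee i gchoose p) * (-1)^p * t powr (ee i - real p))" for p t
    unfolding mqA_def J_def m_def \<beta>_def ee_def s_def by simp
  have ms: "real m = 2 * s" unfolding m_def s_def using k by (simp add: of_nat_diff)
  obtain C1 where C1: "\<And>v. \<bar>v\<bar> \<le> 1/2 \<Longrightarrow>
     \<bar>(1+v) powr s - (\<Sum>i\<le>J. (s gchoose i) * v^i)\<bar> \<le> C1 * \<bar>v\<bar>^(Suc J)"
    using binom_taylor[of s J] by blast
  have "\<forall>i. \<exists>C. \<forall>v::real. \<bar>v\<bar> \<le> 1/2 \<longrightarrow>
     \<bar>(1+v) powr ee i - (\<Sum>p\<le>n. (ee i gchoose p) * v^p)\<bar> \<le> C * \<bar>v\<bar>^(Suc n)"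
    using binom_taylor by blast
  then obtain C2 where C2: "\<And>i v. \<bar>v\<bar> \<le> 1/2 \<Longrightarrow>
     \<bar>(1+v) powr ee i - (\<Sum>p\<le>n. (ee i gchoose p) * v^p)\<bar> \<le> C2 i * \<bar>v\<bar>^(Suc n)"
    by metis
  define r where "r = real m - 2 * real (Suc J)"
  have rneg: "r < 0" unfolding r_def J_def by simp
  have rE: "r \<le> E - real n - 1" unfolding r_def J_def Edef by auto
  define T0 where "T0 = 2*B + 4*c + 2"
  define D where "D = (\<Sum>i\<le>J. \<bar>\<beta> i\<bar> * \<bar>C2 i\<bar>) * B^(Suc n) + \<bar>C1\<bar> * c^(2 * Suc J) * 2 powr (-r)"
  have main: "\<bar>multiquadric c k (x - t) - (\<Sum>p\<le>n. x^p * mqA c k n p t)\<bar> \<le> D * t powr (E - real n - 1)"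
    if t: "t \<ge> T0" and x: "\<bar>x\<bar> \<le> B" for t x
  proof -
    define u where "u = t - x"
    have t1: "t \<ge> 1" using t B c unfolding T0_def by linarith
    have tpos: "t > 0" using t1 by linarith
    have u2: "u \<ge> t/2 + 2*c + 1" using t x unfolding u_def T0_def by linarith
    have upos: "u > 0" using u2 tpos c by linarith
    have ut: "u \<ge> t/2" using u2 c by linarith
    define v where "v = c^2 / u^2"
    have v0: "v \<ge> 0" unfolding v_def by simp
    have "u^2 \<ge> (2*c)^2" using u2 c tpos by (intro power_mono) auto
    hence v1: "v \<le> 1/4" unfolding v_def using upos c by (simp add: field_simps power_mult_distrib)
    define y where "y = - x / t"
    have y1: "\<bar>y\<bar> \<le> B / t" unfolding y_def using x tpos by (simp add: abs_div divide_right_mono)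
    have Bt: "B / t \<le> 1/2" using t tpos c B unfolding T0_def by (simp add: field_simps)
    have y2: "\<bar>y\<bar> \<le> 1/2" using y1 Bt by linarith
    have uty: "u = t * (1 + y)" unfolding u_def y_def using tpos by (simp add: field_simps)
    have ypos: "1 + y > 0" using y2 by linarith
    have eq1: "multiquadric c k (x - t) = u powr (real m) * (1+v) powr s"
    proof -
      have a1: "(x - t)^2 = u^2" unfolding u_def by (simp add: power2_eq_square algebra_simps)
      have a2: "u^2 * (1 + v) = u^2 + c^2" unfolding v_def using upos by (simp add: field_simps)
      have "(x - t)^2 + c^2 = u^2 * (1 + v)" using a1 a2 by simp
      hence "multiquadric c k (x - t) = (u^2 * (1+v)) powr s" unfolding multiquadric_def s_def by simp
      also have "\<dots> = (u^2) powr s * (1+v) powr s" by (rule powr_mult)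
      also have "(u^2) powr s = u powr (real m)"
      proof -
        have "u powr (real 2) = u^2" using upos by (rule powr_realpow)
        hence "(u^2) powr s = (u powr 2) powr s" by simp
        also have "\<dots> = u powr (2 * s)" by (simp add: powr_powr)
        finally show ?thesis using ms by simp
      qed
      finally show ?thesis .
    qed
    define R1 where "R1 = (1+v) powr s - (\<Sum>i\<le>J. (s gchoose i) * v^i)"
    have R1b: "\<bar>R1\<bar> \<le> \<bar>C1\<bar> * v^(Suc J)"
    proof -
      have "\<bar>R1\<bar> \<le> C1 * \<bar>v\<bar>^(Suc J)" unfolding R1_def using C1[of v] v0 v1 by simp
      also have "\<dots> \<le> \<bar>C1\<bar> * v^(Suc J)" using v0 by (simp add: mult_right_mono)
      finally show ?thesis .
    qed
    have eq2: "u powr (real m) * ((s gchoose i) * v^i) = \<beta> i * u powr (ee i)" for i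
    proof -
      have "u powr (ee i) = u powr (real m) / u powr (real (2*i))"
        unfolding ee_def by (simp add: powr_diff[symmetric])
      also have "u powr (real (2*i)) = u^(2*i)" using upos by (rule powr_realpow)
      finally have "u powr (ee i) = u powr (real m) / u^(2*i)" .
      moreover have "v^i = c^(2*i) / u^(2*i)" unfolding v_def by (simp add: power_divide power_mult)
      ultimately show ?thesis unfolding \<beta>_def by (simp add: field_simps)
    qed
    define R2 where "R2 = (\<lambda>i. (1+y) powr ee i - (\<Sum>p\<le>n. (ee i gchoose p) * y^p))"
    have eq3: "u powr (ee i) = t powr (ee i) * (1+y) powr (ee i)" for i
      unfolding uty by (rule powr_mult)
    have eq4: "t powr (ee i) * (\<Sum>p\<le>n. (ee i gchoose p) * y^p)
        = (\<Sum>p\<le>n. x^p * ((ee i gchoose p) * (-1)^p * t powr (ee i - real p)))" for i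
    proof -
      have "t powr (ee i) * ((ee i gchoose p) * y^p) = x^p * ((ee i gchoose p) * (-1)^p * t powr (ee i - real p))" for p
      proof -
        have "t powr (ee i - real p) = t powr (ee i) / t powr (real p)" by (rule powr_diff)
        also have "t powr (real p) = t^p" using tpos by (rule powr_realpow)
        finally have "t powr (ee i - real p) = t powr (ee i) / t^p" .
        moreover have "y^p = (-1)^p * x^p / t^p"
        proof -
          have "y = (-1) * (x / t)" unfolding y_def by simp
          hence "y^p = (-1)^p * (x/t)^p" by (simp only: power_mult_distrib)
          thus ?thesis by (simp add: power_divide)
        qed
        ultimately show ?thesis by (simp add: field_simps)
      qed
      hence "(\<Sum>p\<le>n. t powr (ee i) * ((ee i gchoose p) * y^p)) = (\<Sum>p\<le>n. x^p * ((ee i gchoose p) * (-1)^p * t powr (ee i - real p)))"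
        by (intro sum.cong) auto
      thus ?thesis by (simp only: sum_distrib_left)
    qed
    have decomp: "multiquadric c k (x - t) = (\<Sum>p\<le>n. x^p * mqA c k n p t)
        + (\<Sum>i\<le>J. \<beta> i * t powr (ee i) * R2 i) + u powr (real m) * R1"
    proof -
      have "multiquadric c k (x - t) = u powr (real m) * (\<Sum>i\<le>J. (s gchoose i) * v^i) + u powr (real m) * R1"
        unfolding eq1 R1_def by (simp add: algebra_simps)
      also have "u powr (real m) * (\<Sum>i\<le>J. (s gchoose i) * v^i) = (\<Sum>i\<le>J. \<beta> i * u powr (ee i))"
        by (simp add: sum_distrib_left eq2)
      also have "\<dots> = (\<Sum>i\<le>J. \<beta> i * (t powr (ee i) * (\<Sum>p\<le>n. (ee i gchoose p) * y^p)))
            + (\<Sum>i\<le>J. \<beta> i * t powr (ee i) * R2 i)"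
        unfolding eq3 R2_def sum.distrib[symmetric] by (intro sum.cong) (auto simp: algebra_simps)
      also have "(\<Sum>i\<le>J. \<beta> i * (t powr (ee i) * (\<Sum>p\<le>n. (ee i gchoose p) * y^p)))
          = (\<Sum>p\<le>n. x^p * mqA c k n p t)"
        unfolding eq4 Adef
        by (simp add: sum_distrib_left sum.swap[of _ "{..J}"] mult_ac)
      finally show ?thesis by simp
    qed
    have bnd_i: "\<bar>\<beta> i * t powr (ee i) * R2 i\<bar> \<le> \<bar>\<beta> i\<bar> * \<bar>C2 i\<bar> * B^(Suc n) * t powr (E - real n - 1)" for i
    proof (cases "R2 i = 0")
      case True thus ?thesis using B by simp
    next
      case False
      have eeE: "ee i \<le> E"
      proof (cases "n \<le> m")
        case True thus ?thesis unfolding Edef ee_def by simp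
      next
        case nm: False
        show ?thesis
        proof (cases "i < k")
          case True
          have eei: "ee i = real (m - 2*i)" unfolding ee_def m_def using True by (simp add: of_nat_diff)
          have "R2 i = 0" unfolding R2_def eei
            using binom_exact[of "m - 2*i" n y] nm ypos by simp
          thus ?thesis using False by simp
        next
          case False
          thus ?thesis unfolding Edef ee_def m_def using nm k by (simp add: of_nat_diff)
        qed
      qed
      have "\<bar>R2 i\<bar> \<le> C2 i * \<bar>y\<bar>^(Suc n)" unfolding R2_def using C2 y2 by blast
      also have "\<dots> \<le> \<bar>C2 i\<bar> * (B/t)^(Suc n)"
        by (intro mult_mono power_mono y1) auto
      finally have R2b: "\<bar>R2 i\<bar> \<le> \<bar>C2 i\<bar> * (B/t)^(Suc n)" .
      have "\<bar>\<beta> i * t powr (ee i) * R2 i\<bar> = \<bar>\<beta> i\<bar> * t powr (ee i) * \<bar>R2 i\<bar>"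
        by (simp add: abs_mult)
      also have "\<dots> \<le> \<bar>\<beta> i\<bar> * t powr (ee i) * (\<bar>C2 i\<bar> * (B/t)^(Suc n))"
        by (intro mult_left_mono R2b) auto
      also have "\<dots> = \<bar>\<beta> i\<bar> * \<bar>C2 i\<bar> * B^(Suc n) * (t powr (ee i) / t^(Suc n))"
        by (simp add: power_divide)
      also have "t powr (ee i) / t^(Suc n) = t powr (ee i - real n - 1)"
      proof -
        have "t powr (real (Suc n)) = t^(Suc n)" using tpos by (rule powr_realpow)
        moreover have "t powr (ee i - real n - 1) = t powr (ee i) / t powr (real (Suc n))"
          by (simp add: powr_diff[symmetric] algebra_simps)
        ultimately show ?thesis by simp
      qed
      also have "t powr (ee i - real n - 1) \<le> t powr (E - real n - 1)"
        using eeE t1 by (intro powr_mono) auto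
      finally show ?thesis using B by (simp add: mult_left_mono)
    qed
    have bndR1: "\<bar>u powr (real m) * R1\<bar> \<le> \<bar>C1\<bar> * c^(2 * Suc J) * 2 powr (-r) * t powr (E - real n - 1)"
    proof -
      have "\<bar>u powr (real m) * R1\<bar> = u powr (real m) * \<bar>R1\<bar>" by (simp add: abs_mult)
      also have "\<dots> \<le> u powr (real m) * (\<bar>C1\<bar> * v^(Suc J))" by (intro mult_left_mono R1b) auto
      also have "v^(Suc J) = c^(2 * Suc J) / u^(2 * Suc J)" unfolding v_def by (simp only: power_divide power_mult)
      also have "u powr (real m) * (\<bar>C1\<bar> * (c^(2 * Suc J) / u^(2 * Suc J))) = \<bar>C1\<bar> * c^(2 * Suc J) * u powr r"
      proof -
        have "u powr r = u powr (real m) / u powr (real (2 * Suc J))" unfolding r_def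
          by (simp add: powr_diff[symmetric])
        also have "u powr (real (2 * Suc J)) = u^(2 * Suc J)" using upos by (rule powr_realpow)
        finally show ?thesis by simp
      qed
      finally have h1: "\<bar>u powr (real m) * R1\<bar> \<le> \<bar>C1\<bar> * c^(2 * Suc J) * u powr r" .
      have "u powr r \<le> (t/2) powr r" using rneg ut tpos by (intro powr_mono2') auto
      also have "(t/2) powr r = 2 powr (-r) * t powr r" by (simp add: powr_divide powr_minus_divide)
      also have "2 powr (-r) * t powr r \<le> 2 powr (-r) * t powr (E - real n - 1)"
        using rE t1 by (intro mult_left_mono powr_mono) auto
      finally have h2: "u powr r \<le> 2 powr (-r) * t powr (E - real n - 1)" .
      have "\<bar>C1\<bar> * c^(2 * Suc J) * u powr r \<le> \<bar>C1\<bar> * c^(2 * Suc J) * (2 powr (-r) * t powr (E - real n - 1))"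
        using c by (intro mult_left_mono h2) auto
      with h1 show ?thesis by (simp add: mult_ac)
    qed
    have "\<bar>multiquadric c k (x - t) - (\<Sum>p\<le>n. x^p * mqA c k n p t)\<bar>
       = \<bar>(\<Sum>i\<le>J. \<beta> i * t powr (ee i) * R2 i) + u powr (real m) * R1\<bar>" using decomp by simp
    also have "\<dots> \<le> (\<Sum>i\<le>J. \<bar>\<beta> i * t powr (ee i) * R2 i\<bar>) + \<bar>u powr (real m) * R1\<bar>"
      by (rule order_trans[OF abs_triangle_ineq]) (simp add: sum_abs)
    also have "\<dots> \<le> (\<Sum>i\<le>J. \<bar>\<beta> i\<bar> * \<bar>C2 i\<bar> * B^(Suc n) * t powr (E - real n - 1))
        + \<bar>C1\<bar> * c^(2 * Suc J) * 2 powr (-r) * t powr (E - real n - 1)"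
      by (intro add_mono sum_mono bnd_i bndR1)
    also have "\<dots> = D * t powr (E - real n - 1)"
    proof -
      have "(\<Sum>i\<le>J. \<bar>\<beta> i\<bar> * \<bar>C2 i\<bar> * B^(Suc n) * t powr (E - real n - 1))
          = (\<Sum>i\<le>J. \<bar>\<beta> i\<bar> * \<bar>C2 i\<bar>) * (B^(Suc n) * t powr (E - real n - 1))"
        by (simp add: sum_distrib_right mult.assoc)
      thus ?thesis unfolding D_def by (simp add: algebra_simps)
    qed
    finally show ?thesis .
  qed
  show ?thesis
    by (rule exI[of _ T0], rule exI[of _ D]) (use main B c in \<open>auto simp: T0_def E_def\<close>)
qed



lemma half_int_ne: "real k - 1/2 - real i \<noteq> 0"
proof
  assume "real k - 1/2 - real i = 0"
  hence "real (2*k) = real (2*i+1)" by simp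
  hence "2*k = 2*i+1" by (simp only: of_nat_eq_iff)
  thus False by presburger
qed

lemma gchoose_half_ne: "(real k - 1/2) gchoose i \<noteq> 0"
  unfolding gbinomial_prod_rev using half_int_ne by auto

lemma limit_K:
  fixes c :: real and k n :: nat
  assumes c: "c > 0" and k: "k \<ge> 1"
  shows "\<exists>\<kappa>. \<kappa> \<noteq> 0 \<and> ((\<lambda>t. mqA c k n n t / t powr (mqE k n - real n)) \<longlongrightarrow> \<kappa>) at_top"
proof -
  define m where "m = 2*k - 1"
  define s where "s = real k - 1/2"
  define J where "J = m + n"
  define ee where "ee = (\<lambda>i::nat. real m - 2 * real i)"
  define \<beta> where "\<beta> = (\<lambda>i::nat. (s gchoose i) * c^(2*i))"
  define E where "E = mqE k n"
  have Edef: "E = (if n \<le> m then real m else -1)" unfolding E_def mqE_def m_def by simp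
  have Adef: "mqA c k n p t = (\<Sum>i\<le>J. \<beta> i * (ee i gchoose p) * (-1)^p * t powr (ee i - real p))" for p t
    unfolding mqA_def J_def m_def \<beta>_def ee_def s_def by simp
  define istar where "istar = (if n \<le> m then 0 else k)"
  have km: "k \<le> m" unfolding m_def using k by simp
  have istarJ: "istar \<le> J" unfolding istar_def J_def using km by auto
  have eeiff: "ee i = E \<longleftrightarrow> i = istar" for i
    unfolding ee_def Edef istar_def m_def using k by (auto simp: of_nat_diff)
  define L where "L = (\<lambda>i. if i = istar then \<beta> i * (ee i gchoose n) * (-1)^n else 0)"
  define \<kappa> where "\<kappa> = \<beta> istar * (ee istar gchoose n) * (-1)^n"
  have term_lim: "((\<lambda>t. \<beta> i * (ee i gchoose n) * (-1)^n * t powr (ee i - E)) \<longlongrightarrow> L i) at_top" for i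
  proof (cases "ee i = E")
    case True
    hence "i = istar" using eeiff by simp
    have ev: "eventually (\<lambda>t::real. \<beta> i * (ee i gchoose n) * (-1)^n * t powr (ee i - E) = L i) at_top"
      using eventually_gt_at_top[of 0] by eventually_elim (use True \<open>i = istar\<close> in \<open>simp add: L_def\<close>)
    show ?thesis by (rule tendsto_eventually) (use ev in simp)
  next
    case False
    hence Li: "L i = 0" using eeiff L_def by auto
    show ?thesis
    proof (cases "ee i < E")
      case True
      have "((\<lambda>t::real. t powr (ee i - E)) \<longlongrightarrow> 0) at_top"
        by (rule tendsto_neg_powr) (use True in \<open>auto simp: filterlim_ident\<close>)
      hence "((\<lambda>t::real. \<beta> i * (ee i gchoose n) * (-1)^n * t powr (ee i - E)) \<longlongrightarrow> \<beta> i * (ee i gchoose n) * (-1)^n * 0) at_top"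
        by (intro tendsto_mult tendsto_const)
      thus ?thesis using Li by simp
    next
      case gt: False
      with False have gt: "ee i > E" by simp
      have nm: "\<not> n \<le> m" using gt unfolding Edef ee_def by (auto split: if_splits)
      have ik: "i < k" using gt nm unfolding Edef ee_def m_def using k by (auto simp: of_nat_diff)
      have eei: "ee i = real (m - 2*i)" unfolding ee_def m_def using ik by (simp add: of_nat_diff)
      have "ee i gchoose n = 0" unfolding eei binomial_gbinomial[symmetric] using nm by simp
      thus ?thesis using Li by simp
    qed
  qed
  have sumL: "(\<Sum>i\<le>J. L i) = \<kappa>" unfolding L_def \<kappa>_def using istarJ by (simp add: sum.delta)
  have "((\<lambda>t. \<Sum>i\<le>J. \<beta> i * (ee i gchoose n) * (-1)^n * t powr (ee i - E)) \<longlongrightarrow> (\<Sum>i\<le>J. L i)) at_top"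
    by (intro tendsto_sum term_lim)
  hence lim1: "((\<lambda>t. \<Sum>i\<le>J. \<beta> i * (ee i gchoose n) * (-1)^n * t powr (ee i - E)) \<longlongrightarrow> \<kappa>) at_top"
    using sumL by simp
  have ev: "eventually (\<lambda>t. (\<Sum>i\<le>J. \<beta> i * (ee i gchoose n) * (-1)^n * t powr (ee i - E))
      = mqA c k n n t / t powr (E - real n)) at_top"
    using eventually_gt_at_top[of 0]
  proof eventually_elim
    case (elim t)
    have "mqA c k n n t / t powr (E - real n) = (\<Sum>i\<le>J. \<beta> i * (ee i gchoose n) * (-1)^n * t powr (ee i - real n) / t powr (E - real n))"
      unfolding Adef by (simp add: sum_divide_distrib)
    also have "\<dots> = (\<Sum>i\<le>J. \<beta> i * (ee i gchoose n) * (-1)^n * t powr (ee i - E))"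
    proof (intro sum.cong refl)
      fix i
      have "t powr (ee i - E) = t powr (ee i - real n) / t powr (E - real n)"
        by (simp add: powr_diff[symmetric])
      thus "\<beta> i * (ee i gchoose n) * (-1)^n * t powr (ee i - real n) / t powr (E - real n) =
            \<beta> i * (ee i gchoose n) * (-1)^n * t powr (ee i - E)" by simp
    qed
    finally show ?case by simp
  qed
  have lim2: "((\<lambda>t. mqA c k n n t / t powr (mqE k n - real n)) \<longlongrightarrow> \<kappa>) at_top"
    using tendsto_cong[OF ev] lim1 unfolding E_def by simp
  have kne: "\<kappa> \<noteq> 0"
  proof (cases "n \<le> m")
    case True
    hence "istar = 0" unfolding istar_def by simp
    moreover have "ee 0 gchoose n \<noteq> 0" unfolding ee_def using True
      by (simp add: binomial_gbinomial[symmetric])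
    ultimately show ?thesis unfolding \<kappa>_def \<beta>_def by simp
  next
    case False
    hence is_k: "istar = k" unfolding istar_def by simp
    have eek: "ee k = -1" unfolding ee_def m_def using k by (simp add: of_nat_diff)
    have "(-1::real) gchoose n = (-1)^n * ((1 + real n - 1) gchoose n)"
      using gbinomial_minus[of "1::real" n] by simp
    hence g1: "(-1::real) gchoose n \<noteq> 0" by (simp add: binomial_gbinomial[symmetric])
    have "\<beta> k \<noteq> 0" unfolding \<beta>_def s_def using gchoose_half_ne c by simp
    thus ?thesis unfolding \<kappa>_def is_k eek using g1 by simp
  qed
  show ?thesis using kne lim2 by blast
qed



lemma mono_AP:
  fixes c a b :: real and k :: nat and xs :: "int \<Rightarrow> real"
  assumes c: "c > 0" and k: "k \<ge> 1"
    and lim: "filterlim (\<lambda>j::nat. xs (int j)) at_top sequentially"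
  shows "AP c k xs a b (\<lambda>x. x^n)"
proof (induction n rule: less_induct)
  case (less n)
  define B where "B = \<bar>a\<bar> + \<bar>b\<bar>"
  have B0: "B \<ge> 0" unfolding B_def by simp
  obtain T0 D where T0: "T0 \<ge> 1" and exp: "\<And>t x. t \<ge> T0 \<Longrightarrow> \<bar>x\<bar> \<le> B \<Longrightarrow>
     \<bar>multiquadric c k (x - t) - (\<Sum>p\<le>n. x^p * mqA c k n p t)\<bar> \<le> D * t powr (mqE k n - real n - 1)"
    using expansion[OF c k B0, of n] by blast
  obtain \<kappa> where kne: "\<kappa> \<noteq> 0" and klim: "((\<lambda>t. mqA c k n n t / t powr (mqE k n - real n)) \<longlongrightarrow> \<kappa>) at_top"
    using limit_K[OF c k, of n] by blast
  define E where "E = mqE k n"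
  define K where "K = (\<lambda>t. mqA c k n n t / t powr (E - real n))"
  show ?case
  proof (rule AP_limit)
    fix \<epsilon> :: real assume e: "\<epsilon> > 0"
    have Klim: "(K \<longlongrightarrow> \<kappa>) at_top" using klim unfolding K_def E_def .
    have evK: "eventually (\<lambda>t. K t \<noteq> 0) at_top" using tendsto_imp_eventually_ne[OF Klim kne] .
    have "((\<lambda>t. D * inverse t / \<bar>K t\<bar>) \<longlongrightarrow> D * 0 / \<bar>\<kappa>\<bar>) at_top"
      by (intro tendsto_intros Klim tendsto_inverse_0_at_top filterlim_ident) (use kne in simp)
    hence "eventually (\<lambda>t. D * inverse t / \<bar>K t\<bar> < \<epsilon>) at_top"
      using e by (intro order_tendstoD(2)) auto
    hence evQ: "eventually (\<lambda>t. t \<ge> T0 \<and> mqA c k n n t \<noteq> 0 \<and>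
        D * t powr (E - real n - 1) / \<bar>mqA c k n n t\<bar> < \<epsilon>) at_top"
      using evK eventually_ge_at_top[of T0]
    proof eventually_elim
      case (elim t)
      have tpos: "t > 0" using elim T0 by linarith
      have pne: "t powr (E - real n) \<noteq> 0" using tpos by simp
      have A: "mqA c k n n t = K t * t powr (E - real n)" unfolding K_def using pne by simp
      have A0: "mqA c k n n t \<noteq> 0" using A elim pne by simp
      have pw: "t powr (E - real n - 1) = t powr (E - real n) / t"
        using tpos by (simp add: powr_diff)
      have "D * t powr (E - real n - 1) / \<bar>mqA c k n n t\<bar> = D * inverse t / \<bar>K t\<bar>"
        unfolding pw A using tpos pne by (simp add: abs_mult field_simps)
      thus ?case using elim A0 by simp
    qed
    have "eventually (\<lambda>j. (\<lambda>t. t \<ge> T0 \<and> mqA c k n n t \<noteq> 0 \<and>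
        D * t powr (E - real n - 1) / \<bar>mqA c k n n t\<bar> < \<epsilon>) (xs (int j))) sequentially"
      by (rule eventually_compose_filterlim[OF evQ lim])
    hence "eventually (\<lambda>j. j \<ge> 1 \<and> (\<lambda>t. t \<ge> T0 \<and> mqA c k n n t \<noteq> 0 \<and>
        D * t powr (E - real n - 1) / \<bar>mqA c k n n t\<bar> < \<epsilon>) (xs (int j))) sequentially"
      using eventually_ge_at_top[of "1::nat"] by eventually_elim auto
    then obtain N0 where N0: "\<forall>j\<ge>N0. j \<ge> 1 \<and> (\<lambda>t. t \<ge> T0 \<and> mqA c k n n t \<noteq> 0 \<and>
        D * t powr (E - real n - 1) / \<bar>mqA c k n n t\<bar> < \<epsilon>) (xs (int j))"
      unfolding eventually_sequentially by blast
    obtain j where j1: "j \<ge> 1" and tT: "xs (int j) \<ge> T0"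
      and An: "mqA c k n n (xs (int j)) \<noteq> 0"
      and small: "D * (xs (int j)) powr (E - real n - 1) / \<bar>mqA c k n n (xs (int j))\<bar> < \<epsilon>"
      using N0 by blast
    define t where "t = xs (int j)"
    define g where "g = (\<lambda>x. (1 / mqA c k n n t) * (multiquadric c k (x - t)
         + (-1) * (\<Sum>p<n. mqA c k n p t * x^p)))"
    have APg: "AP c k xs a b g"
      unfolding g_def t_def
      by (intro AP_scale AP_add AP_base[OF j1] AP_sum less) auto
    have "\<bar>x^n - g x\<bar> < \<epsilon>" if x: "x \<in> {a..b}" for x
    proof -
      have xB: "\<bar>x\<bar> \<le> B" using x unfolding B_def by auto
      have tT': "t \<ge> T0" using tT unfolding t_def .
      have An': "mqA c k n n t \<noteq> 0" using An unfolding t_def .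
      have split: "(\<Sum>p\<le>n. x^p * mqA c k n p t) = (\<Sum>p<n. mqA c k n p t * x^p) + x^n * mqA c k n n t"
        by (simp add: lessThan_Suc_atMost[symmetric] mult.commute)
      have "x^n - g x = - (multiquadric c k (x - t) - (\<Sum>p\<le>n. x^p * mqA c k n p t)) / mqA c k n n t"
        unfolding g_def split using An' by (simp add: field_simps)
      hence "\<bar>x^n - g x\<bar> = \<bar>multiquadric c k (x - t) - (\<Sum>p\<le>n. x^p * mqA c k n p t)\<bar> / \<bar>mqA c k n n t\<bar>"
        by (simp add: abs_div abs_minus_commute)
      also have "\<dots> \<le> D * t powr (E - real n - 1) / \<bar>mqA c k n n t\<bar>"
        using exp[OF tT' xB] An' unfolding E_def by (intro divide_right_mono) auto
      also have "\<dots> < \<epsilon>" using small unfolding t_def .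
      finally show ?thesis .
    qed
    thus "\<exists>g. AP c k xs a b g \<and> (\<forall>x\<in>{a..b}. \<bar>x^n - g x\<bar> < \<epsilon>)" using APg by blast
  qed
qed

theorem theorem3p1:
  fixes c :: real and k :: nat and xs :: "int \<Rightarrow> real"
    and f :: "real \<Rightarrow> real" and a b \<epsilon> :: real
  assumes "c > 0" and "k \<ge> 1"
    and "scattered xs"
    and "continuous_on {a..b} f"
    and "\<epsilon> > 0"
  shows "\<exists>(N::nat) (coef::nat \<Rightarrow> real).
           \<forall>x\<in>{a..b}. \<bar>f x - (\<Sum>j=1..N. coef j * multiquadric c k (x - xs (int j)))\<bar> < \<epsilon>"
proof -
  have "filterlim xs at_top at_top" using assms(3) unfolding scattered_def by blast
  hence lim: "filterlim (\<lambda>j::nat. xs (int j)) at_top sequentially"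
    by (rule filterlim_compose) (rule filterlim_int_sequentially)
  show ?thesis
    by (rule final_from_monomials[OF mono_AP[OF assms(1,2) lim] assms(4,5)])
qed


end
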